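(* Let $t$ be a positive integer and let $\mathcal{P}=\{P_1,\ldots,P_E\}$ be a locally $(2t,2)$-bounded partition of $\mathbb{F}_q^k$ (with this fixed indexing of its blocks). For $u\in\mathbb{F}_q^k$ let $B_{\mathcal{P}}(u,2t)=\{j\in[E]: B(u,2t)\cap P_j\neq\emptyset\}$. Define $\mathcal{C}:\mathbb{F}_q^k\to\mathbb{F}_q^{k+2t}$ by $\mathcal{C}(u)=(u,u_p)$, where, if $u\in P_i$, $u_p=(0,\ldots,0)\in\mathbb{F}_q^{2t}$ when $i=\min B_{\mathcal{P}}(u,2t)$ and $u_p=(1,\ldots,1)\in\mathbb{F}_q^{2t}$ otherwise. Then $\mathcal{C}$ is a $(\mathcal{P},t)$-encoding.
   Context: $B(u,\rho)$ denotes the Hamming ball of radius $\rho$ centered at $u$. A partition $\mathcal{P}=\{P_1,\ldots,P_E\}$ of $\mathbb{F}_q^k$ is locally $(\rho,\lambda)$-bounded if for every $u\in\mathbb{F}_q^k$, $|\{j\in[E]: B(u,\rho)\cap P_j\ne\emptyset\}|\le\lambda$. A $(\mathcal{P},t)$-encoding is a systematic map $\mathcal{C}:\mathbb{F}_q^k\to\mathbb{F}_q^{k+r}$ with $d(\mathcal{C}(u),\mathcal{C}(v))\ge 2t+1$ (Hamming distance) whenever $u,v$ lie in different blocks of $\mathcal{P}$. *)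

theory Defs
  imports Main
begin

definition vecs :: "nat \<Rightarrow> 'a list set" where
  "vecs n = {u. length u = n}"

definition hamming :: "'a list \<Rightarrow> 'a list \<Rightarrow> nat" where
  "hamming u v = card {i. i < length u \<and> u ! i \<noteq> v ! i}"

definition hball :: "nat \<Rightarrow> 'a list \<Rightarrow> nat \<Rightarrow> 'a list set" where
  "hball n u \<rho> = {v \<in> vecs n. hamming u v \<le> \<rho>}"

definition is_partition :: "nat \<Rightarrow> nat \<Rightarrow> (nat \<Rightarrow> 'a list set) \<Rightarrow> bool" where
  "is_partition k E P \<longleftrightarrow>
     (\<forall>j\<in>{1..E}. P j \<noteq> {} \<and> P j \<subseteq> vecs k) \<and>
     (\<forall>i\<in>{1..E}. \<forall>j\<in>{1..E}. i \<noteq> j \<longrightarrow> P i \<inter> P j = {}) \<and>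
     (\<Union>j\<in>{1..E}. P j) = vecs k"

definition ball_blocks :: "nat \<Rightarrow> nat \<Rightarrow> (nat \<Rightarrow> 'a list set) \<Rightarrow> 'a list \<Rightarrow> nat \<Rightarrow> nat set" where
  "ball_blocks k E P u \<rho> = {j \<in> {1..E}. hball k u \<rho> \<inter> P j \<noteq> {}}"

definition locally_bounded :: "nat \<Rightarrow> nat \<Rightarrow> (nat \<Rightarrow> 'a list set) \<Rightarrow> nat \<Rightarrow> nat \<Rightarrow> bool" where
  "locally_bounded k E P \<rho> lam \<longleftrightarrow>
     (\<forall>u\<in>vecs k. card (ball_blocks k E P u \<rho>) \<le> lam)"

definition block_of :: "nat \<Rightarrow> (nat \<Rightarrow> 'a list set) \<Rightarrow> 'a list \<Rightarrow> nat" where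
  "block_of E P u = (THE i. i \<in> {1..E} \<and> u \<in> P i)"

definition is_encoding :: "nat \<Rightarrow> nat \<Rightarrow> (nat \<Rightarrow> 'a list set) \<Rightarrow> nat \<Rightarrow> nat \<Rightarrow> ('a list \<Rightarrow> 'a list) \<Rightarrow> bool" where
  "is_encoding k E P r t C \<longleftrightarrow>
     (\<forall>u\<in>vecs k. length (C u) = k + r \<and> take k (C u) = u) \<and>
     (\<forall>i\<in>{1..E}. \<forall>j\<in>{1..E}. \<forall>u\<in>P i. \<forall>v\<in>P j. i \<noteq> j \<longrightarrow> hamming (C u) (C v) \<ge> 2 * t + 1)"

definition enc6 :: "nat \<Rightarrow> nat \<Rightarrow> (nat \<Rightarrow> 'a::zero_neq_one list set) \<Rightarrow> nat \<Rightarrow> 'a list \<Rightarrow> 'a list" where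
  "enc6 k E P t u = u @ (if block_of E P u = Min (ball_blocks k E P u (2 * t))
                         then replicate (2 * t) 0 else replicate (2 * t) 1)"

end

theory Submission
  imports Defs
begin

lemma hamming_append:
  assumes "length u = length v" "length a = length b"
  shows "hamming (u @ a) (v @ b) = hamming u v + hamming a b"
proof -
  let ?n = "length u" and ?m = "length a"
  have eq: "{i. i < length (u @ a) \<and> (u @ a) ! i \<noteq> (v @ b) ! i}
      = {i. i < ?n \<and> u ! i \<noteq> v ! i} \<union> (\<lambda>i. i + ?n) ` {i. i < ?m \<and> a ! i \<noteq> b ! i}"
  proof (rule set_eqI, rule iffI)
    fix x assume "x \<in> {i. i < length (u @ a) \<and> (u @ a) ! i \<noteq> (v @ b) ! i}"
    then show "x \<in> {i. i < ?n \<and> u ! i \<noteq> v ! i} \<union> (\<lambda>i. i + ?n) ` {i. i < ?m \<and> a ! i \<noteq> b ! i}"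
      using assms by (cases "x < ?n") (auto simp: nth_append image_iff intro!: exI[of _ "x - ?n"])
  next
    fix x assume "x \<in> {i. i < ?n \<and> u ! i \<noteq> v ! i} \<union> (\<lambda>i. i + ?n) ` {i. i < ?m \<and> a ! i \<noteq> b ! i}"
    then show "x \<in> {i. i < length (u @ a) \<and> (u @ a) ! i \<noteq> (v @ b) ! i}"
      using assms by (auto simp: nth_append)
  qed
  have "card ({i. i < ?n \<and> u ! i \<noteq> v ! i} \<union> (\<lambda>i. i + ?n) ` {i. i < ?m \<and> a ! i \<noteq> b ! i})
      = card {i. i < ?n \<and> u ! i \<noteq> v ! i} + card ((\<lambda>i. i + ?n) ` {i. i < ?m \<and> a ! i \<noteq> b ! i})"
    by (rule card_Un_disjoint) auto
  also have "card ((\<lambda>i. i + ?n) ` {i. i < ?m \<and> a ! i \<noteq> b ! i}) = card {i. i < ?m \<and> a ! i \<noteq> b ! i}"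
    by (rule card_image) (auto simp: inj_on_def)
  finally show ?thesis using eq assms unfolding hamming_def by simp
qed

lemma hamming_sym: "length u = length v \<Longrightarrow> hamming u v = hamming v u"
  unfolding hamming_def by (metis)

lemma hamming_self: "hamming u u = 0"
  unfolding hamming_def by simp

lemma hamming_pos: "length u = length v \<Longrightarrow> u \<noteq> v \<Longrightarrow> hamming u v \<ge> 1"
proof -
  assume l: "length u = length v" and ne: "u \<noteq> v"
  then obtain i where "i < length u" "u ! i \<noteq> v ! i" using nth_equalityI by blast
  then have "{i. i < length u \<and> u ! i \<noteq> v ! i} \<noteq> {}" by blast
  moreover have "finite {i. i < length u \<and> u ! i \<noteq> v ! i}" by simp
  ultimately show ?thesis unfolding hamming_def
    by (simp add: Suc_leI card_gt_0_iff)
qed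

lemma hamming_rep01:
  "hamming (replicate n (0::'a::zero_neq_one)) (replicate n 1) = n"
  "hamming (replicate n (1::'a::zero_neq_one)) (replicate n 0) = n"
proof -
  have "{i. i < n \<and> replicate n (0::'a) ! i \<noteq> replicate n 1 ! i} = {..<n}" by auto
  moreover have "{i. i < n \<and> replicate n (1::'a) ! i \<noteq> replicate n 0 ! i} = {..<n}" by auto
  ultimately show "hamming (replicate n (0::'a::zero_neq_one)) (replicate n 1) = n"
    "hamming (replicate n (1::'a::zero_neq_one)) (replicate n 0) = n"
    unfolding hamming_def by simp_all
qed

lemma hamming_rep_same: "hamming (replicate n x) (replicate n x) = 0"
  by (rule hamming_self)

theorem theorem6:
  fixes P :: "nat \<Rightarrow> ('a::{finite,field}) list set" and k E t :: nat
  assumes "t > 0"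
    and "is_partition k E P"
    and "locally_bounded k E P (2 * t) 2"
  shows "is_encoding k E P (2 * t) t (enc6 k E P t)"
proof -
  note part = assms(2)[unfolded is_partition_def]
  have bo: "block_of E P u = i" if "i \<in> {1..E}" "u \<in> P i" for u i
    unfolding block_of_def
  proof (rule the_equality)
    show "i \<in> {1..E} \<and> u \<in> P i" using that by simp
    fix j assume "j \<in> {1..E} \<and> u \<in> P j"
    then show "j = i" using part that by blast
  qed
  have first: "\<forall>u\<in>vecs k. length (enc6 k E P t u) = k + 2 * t \<and> take k (enc6 k E P t u) = u"
    by (auto simp: enc6_def vecs_def)
  have second: "hamming (enc6 k E P t u) (enc6 k E P t v) \<ge> 2 * t + 1"
    if ij: "i \<in> {1..E}" "j \<in> {1..E}" "u \<in> P i" "v \<in> P j" "i \<noteq> j" for i j u v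
  proof -
    have uk: "u \<in> vecs k" and vk: "v \<in> vecs k" using part ij by blast+
    have lu: "length u = k" and lv: "length v = k" using uk vk by (auto simp: vecs_def)
    have uv: "u \<noteq> v" using part ij by blast
    define pu where "pu = (if block_of E P u = Min (ball_blocks k E P u (2 * t))
                         then replicate (2 * t) (0::'a) else replicate (2 * t) 1)"
    define pv where "pv = (if block_of E P v = Min (ball_blocks k E P v (2 * t))
                         then replicate (2 * t) (0::'a) else replicate (2 * t) 1)"
    have lp: "length pu = length pv" by (simp add: pu_def pv_def)
    have H: "hamming (enc6 k E P t u) (enc6 k E P t v) = hamming u v + hamming pu pv"
      unfolding enc6_def pu_def[symmetric] pv_def[symmetric]
      by (rule hamming_append) (use lu lv lp in auto)
    show ?thesis
    proof (cases "hamming u v \<le> 2 * t")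
      case False then show ?thesis using H by simp
    next
      case True
      have huv: "hamming v u \<le> 2 * t" using True hamming_sym lu lv by metis
      have Bu: "ball_blocks k E P u (2 * t) = {i, j}"
      proof -
        have sub: "{i, j} \<subseteq> ball_blocks k E P u (2 * t)"
          using ij uk vk True unfolding ball_blocks_def hball_def
          by (auto simp: hamming_self)
        have fin: "finite (ball_blocks k E P u (2 * t))" unfolding ball_blocks_def by simp
        have "card (ball_blocks k E P u (2 * t)) \<le> 2" using assms(3) uk
          unfolding locally_bounded_def by blast
        moreover have "card {i, j} = 2" using ij by simp
        ultimately show ?thesis using sub fin by (metis card_seteq)
      qed
      have Bv: "ball_blocks k E P v (2 * t) = {i, j}"
      proof -
        have sub: "{i, j} \<subseteq> ball_blocks k E P v (2 * t)"
          using ij uk vk huv unfolding ball_blocks_def hball_def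
          by (auto simp: hamming_self)
        have fin: "finite (ball_blocks k E P v (2 * t))" unfolding ball_blocks_def by simp
        have "card (ball_blocks k E P v (2 * t)) \<le> 2" using assms(3) vk
          unfolding locally_bounded_def by blast
        moreover have "card {i, j} = 2" using ij by simp
        ultimately show ?thesis using sub fin by (metis card_seteq)
      qed
      have "Min {i, j} = i \<or> Min {i, j} = j" by (simp add: min_def)
      then have "hamming pu pv = 2 * t"
        unfolding pu_def pv_def Bu Bv bo[OF ij(1,3)] bo[OF ij(2,4)]
        using ij(5) by (auto simp: hamming_rep01)
      moreover have "hamming u v \<ge> 1" using hamming_pos lu lv uv by metis
      ultimately show ?thesis using H by simp
    qed
  qed
  show ?thesis unfolding is_encoding_def using first second by blast
qed

end
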